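(* Let $q$ be a positive integer, $k\ge1$, $p_1,\dots,p_k\ge1$ integers and $s_i,a_{ij},\nu$ integers. Suppose $B(n)=\lceil n/q\rceil$ formally satisfies the recursion $R(n)=\sum_{i=1}^k R\big(n-s_i-\sum_{j=1}^{p_i}R(n-a_{ij})\big)+\nu$, i.e. $B(n)=\sum_{i=1}^k B\big(n-s_i-\sum_{j=1}^{p_i}B(n-a_{ij})\big)+\nu$ for all integers $n$. Then $B$ also formally satisfies the recursion $$R'(n)=\sum_{i=1}^k R'\Big(n-s_i-\sum_{j=1}^{p_i}R'(n-a_{ij})\Big)+R'\big(n-1-R'(n-1)-R'(n-2)-\cdots-R'(n-q)\big)+\nu,$$ i.e. $B(n)=\sum_{i=1}^k B\big(n-s_i-\sum_{j}B(n-a_{ij})\big)+B\big(n-1-\sum_{t=1}^q B(n-t)\big)+\nu$ for all integers $n$. *)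

theory Defs
  imports Complex_Main
begin

definition ceilq :: "int \<Rightarrow> int \<Rightarrow> int" where
  "ceilq q n = \<lceil>real_of_int n / real_of_int q\<rceil>"

end

theory Submission
  imports Defs
begin

lemma ceilq_div: assumes "q \<ge> 1" shows "ceilq q x = (x + q - 1) div q"
proof -
  define d where "d = (x + q - 1) div q"
  define r where "r = (x + q - 1) mod q"
  have e: "x + q - 1 = q * d + r" unfolding d_def r_def by simp
  have r: "0 \<le> r" "r < q" using assms unfolding r_def by auto
  have qr: "real_of_int q > 0" using assms by simp
  have ex: "real_of_int x = real_of_int q * real_of_int d + real_of_int r - real_of_int q + 1"
    using e by (smt (verit) of_int_add of_int_diff of_int_mult of_int_1)
  have "real_of_int d - 1 < real_of_int x / real_of_int q"
    using qr r ex by (simp add: field_simps)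
  moreover have "real_of_int x / real_of_int q \<le> real_of_int d"
  proof -
    have "r - q + 1 \<le> 0" using r by simp
    then have "real_of_int r - real_of_int q + 1 \<le> 0" by linarith
    then show ?thesis using qr ex by (simp add: field_simps)
  qed
  ultimately show ?thesis unfolding ceilq_def d_def[symmetric]
    by (simp add: ceiling_eq_iff)
qed

lemma hermite:
  fixes q :: int and Q :: nat
  assumes "q = int Q" "Q \<ge> 1"
  shows "(\<Sum>u<Q. (m + int u) div q) = m"
proof -
  obtain Q' where Q: "Q = Suc Q'" using assms by (cases Q) auto
  define g where "g m u = (m + int u) div q" for m u
  have step: "(\<Sum>u<Q. g (m+1) u) = (\<Sum>u<Q. g m u) + 1" for m
  proof -
    have a: "(\<Sum>u<Q. g m u) = g m 0 + (\<Sum>u<Q'. g m (Suc u))"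
      unfolding Q by (rule sum.lessThan_Suc_shift)
    have b: "(\<Sum>u<Q. g (m+1) u) = (\<Sum>u<Q'. g (m+1) u) + g (m+1) Q'"
      unfolding Q by simp
    have c: "g (m+1) u = g m (Suc u)" for u unfolding g_def by (simp add: algebra_simps)
    have d: "g (m+1) Q' = g m 0 + 1"
    proof -
      have "m + 1 + int Q' = m + q" using assms Q by simp
      then have "g (m+1) Q' = (m + q) div q" unfolding g_def by (simp add: add.assoc)
      also have "\<dots> = m div q + 1" using assms by simp
      finally show ?thesis unfolding g_def by simp
    qed
    show ?thesis using a b c d by simp
  qed
  have base0: "(\<Sum>u<Q. g 0 u) = 0"
  proof (rule sum.neutral, rule ballI)
    fix u assume "u \<in> {..<Q}"
    then have "0 \<le> int u" "int u < q" using assms by auto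
    then show "g 0 u = 0" unfolding g_def by simp
  qed
  have "(\<Sum>u<Q. g m u) = m"
  proof (induction m rule: int_induct[where k=0])
    case base then show ?case using base0 by simp
  next
    case (step1 i) then show ?case using step[of i] by simp
  next
    case (step2 i) then show ?case using step[of "i-1"] by simp
  qed
  then show ?thesis unfolding g_def .
qed

theorem theorem5:
  fixes q :: int and k :: nat and p :: "nat \<Rightarrow> nat"
    and s :: "nat \<Rightarrow> int" and a :: "nat \<Rightarrow> nat \<Rightarrow> int" and \<nu> :: int
  assumes "q \<ge> 1" and "k \<ge> 1" and "\<forall>i\<in>{1..k}. p i \<ge> 1"
    and "\<forall>n::int. ceilq q n =
           (\<Sum>i=1..k. ceilq q (n - s i - (\<Sum>j=1..p i. ceilq q (n - a i j)))) + \<nu>"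
  shows "\<forall>n::int. ceilq q n =
           (\<Sum>i=1..k. ceilq q (n - s i - (\<Sum>j=1..p i. ceilq q (n - a i j))))
           + ceilq q (n - 1 - (\<Sum>t=1..nat q. ceilq q (n - int t))) + \<nu>"
proof
  fix n :: int
  define Q where "Q = nat q"
  have qQ: "q = int Q" "Q \<ge> 1" using assms(1) unfolding Q_def by auto
  have "(\<Sum>t=1..nat q. ceilq q (n - int t)) = (\<Sum>t=1..Q. (n - 1 + int (Q - t)) div q)"
    unfolding Q_def[symmetric]
  proof (rule sum.cong)
    fix t assume "t \<in> {1..Q}"
    then have e: "n - 1 + int (Q - t) = n - int t + q - 1" using qQ by (simp add: of_nat_diff)
    show "ceilq q (n - int t) = (n - 1 + int (Q - t)) div q"
      unfolding e by (rule ceilq_div[OF assms(1)])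
  qed simp
  also have "\<dots> = (\<Sum>u<Q. (n - 1 + int u) div q)"
  proof (rule sum.reindex_bij_witness[where i="\<lambda>u. Q - u" and j="\<lambda>t. Q - t"])
    fix t assume "t \<in> {1..Q}" then show "Q - (Q - t) = t" by simp
  next
    fix t assume "t \<in> {1..Q}" then show "Q - t \<in> {..<Q}" by simp
  next
    fix u assume "u \<in> {..<Q}" then show "Q - (Q - u) = u" by simp
  next
    fix u assume "u \<in> {..<Q}" then show "Q - u \<in> {1..Q}" by simp
  next
    fix t assume "t \<in> {1..Q}"
    show "(n - 1 + int (Q - t)) div q = (n - 1 + int (Q - t)) div q" by (rule refl)
  qed
  also have "\<dots> = n - 1" using hermite[OF qQ] .
  finally have "ceilq q (n - 1 - (\<Sum>t=1..nat q. ceilq q (n - int t))) = 0"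
    by (simp only: diff_self ceilq_def of_int_0 div_0 ceiling_zero)
  then show "ceilq q n =
           (\<Sum>i=1..k. ceilq q (n - s i - (\<Sum>j=1..p i. ceilq q (n - a i j))))
           + ceilq q (n - 1 - (\<Sum>t=1..nat q. ceilq q (n - int t))) + \<nu>"
    using assms(4)[rule_format, of n] by linarith
qed

end
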